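(* Let $G$ be a bipartite graph with minimum degree $\delta$. Then $R(G)\leqslant\sqrt{\delta}$. Moreover, if $\delta\geqslant 2$, or if $\delta=1$ and $G$ has a connected component with minimum degree $1$ that is not isomorphic to $K_2$, then $R(G)<\sqrt{\delta}$.
   Context: All graphs are simple. For a graph $G$ of order $n$ with adjacency eigenvalues $\lambda_1\geqslant\cdots\geqslant\lambda_n$, the HL-index is $R(G)=\max\{|\lambda_{\lfloor (n+1)/2\rfloor}|,\ |\lambda_{\lceil (n+1)/2\rceil}|\}$. *)

theory Defs
  imports "Jordan_Normal_Form.Char_Poly"
begin

definition simple_graph :: "nat \<Rightarrow> (nat \<Rightarrow> nat \<Rightarrow> bool) \<Rightarrow> bool" where
  "simple_graph n E \<longleftrightarrow>
     (\<forall>u<n. \<forall>v<n. E u v \<longrightarrow> E v u) \<and> (\<forall>v<n. \<not> E v v)"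

definition adj_matrix :: "nat \<Rightarrow> (nat \<Rightarrow> nat \<Rightarrow> bool) \<Rightarrow> real mat" where
  "adj_matrix n E = mat n n (\<lambda>(i, j). if E i j then 1 else 0)"

text \<open>Adjacency eigenvalues, listed with multiplicity in non-increasing order
  (lambda_1 \<ge> ... \<ge> lambda_n; lambda_k is the (k-1)-th list entry).\<close>
definition eigenvalues_desc :: "nat \<Rightarrow> (nat \<Rightarrow> nat \<Rightarrow> bool) \<Rightarrow> real list" where
  "eigenvalues_desc n E = (THE ls. length ls = n \<and> sorted (rev ls) \<and>
      char_poly (adj_matrix n E) = (\<Prod>x\<leftarrow>ls. [:- x, 1:]))"

definition HL_index :: "nat \<Rightarrow> (nat \<Rightarrow> nat \<Rightarrow> bool) \<Rightarrow> real" where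
  "HL_index n E = (let ls = eigenvalues_desc n E in
     max \<bar>ls ! ((n + 1) div 2 - 1)\<bar> \<bar>ls ! ((n + 2) div 2 - 1)\<bar>)"

definition degree :: "nat \<Rightarrow> (nat \<Rightarrow> nat \<Rightarrow> bool) \<Rightarrow> nat \<Rightarrow> nat" where
  "degree n E v = card {w. w < n \<and> E v w}"

definition min_degree :: "nat \<Rightarrow> (nat \<Rightarrow> nat \<Rightarrow> bool) \<Rightarrow> nat" where
  "min_degree n E = Min (degree n E ` {0..<n})"

definition bipartite :: "nat \<Rightarrow> (nat \<Rightarrow> nat \<Rightarrow> bool) \<Rightarrow> bool" where
  "bipartite n E \<longleftrightarrow> (\<exists>X \<subseteq> {0..<n}. \<forall>u<n. \<forall>v<n. E u v \<longrightarrow> (u \<in> X \<longleftrightarrow> v \<notin> X))"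

definition reachable :: "nat \<Rightarrow> (nat \<Rightarrow> nat \<Rightarrow> bool) \<Rightarrow> nat \<Rightarrow> nat \<Rightarrow> bool" where
  "reachable n E = (\<lambda>u v. u < n \<and> v < n \<and> E u v)\<^sup>*\<^sup>*"

definition component :: "nat \<Rightarrow> (nat \<Rightarrow> nat \<Rightarrow> bool) \<Rightarrow> nat \<Rightarrow> nat set" where
  "component n E v = {w. w < n \<and> reachable n E v w}"

definition is_component :: "nat \<Rightarrow> (nat \<Rightarrow> nat \<Rightarrow> bool) \<Rightarrow> nat set \<Rightarrow> bool" where
  "is_component n E C \<longleftrightarrow> (\<exists>v<n. C = component n E v)"

definition min_degree_on :: "(nat \<Rightarrow> nat \<Rightarrow> bool) \<Rightarrow> nat set \<Rightarrow> nat" where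
  "min_degree_on E C = Min ((\<lambda>v. card {w \<in> C. E v w}) ` C)"

definition iso_K2_on :: "(nat \<Rightarrow> nat \<Rightarrow> bool) \<Rightarrow> nat set \<Rightarrow> bool" where
  "iso_K2_on E C \<longleftrightarrow> (\<exists>u v. u \<noteq> v \<and> C = {u, v} \<and> E u v)"

end

theory Submission
  imports Defs "HOL-Analysis.Function_Topology"
begin


lemma lin_prod_nonzero: "(\<Prod>x\<leftarrow>xs. [:- (x::'a::idom), 1:]) \<noteq> 0"
  by (auto simp: prod_list_zero_iff)

lemma lin_prod_degree: "Polynomial.degree (\<Prod>x\<leftarrow>xs. [:- (x::'a::idom), 1:]) = length xs"
proof (induction xs)
  case (Cons a xs)
  have "(\<Prod>x\<leftarrow>a#xs. [:- x, 1:]) = [:- a, 1:] * (\<Prod>x\<leftarrow>xs. [:- x, 1:])" by simp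
  also have "Polynomial.degree \<dots> = 1 + length xs"
    by (subst degree_mult_eq) (use lin_prod_nonzero[of xs] Cons.IH in auto)
  finally show ?case by simp
qed simp

lemma lin_prod_poly: "poly (\<Prod>x\<leftarrow>xs. [:- (x::'a::idom), 1:]) a = (\<Prod>x\<leftarrow>xs. a - x)"
  by (induction xs) (simp_all add: algebra_simps)

lemma lin_prod_mset:
  fixes xs ys :: "'a::idom list"
  assumes "(\<Prod>x\<leftarrow>xs. [:- x, 1:]) = (\<Prod>y\<leftarrow>ys. [:- y, 1:])"
  shows "mset xs = mset ys"
  using assms
proof (induction xs arbitrary: ys)
  case Nil
  then have "length ys = 0" using lin_prod_degree[of ys] by simp
  then show ?case by simp
next
  case (Cons x xs)
  have "poly (\<Prod>y\<leftarrow>ys. [:- y, 1:]) x = 0" using Cons.prems[symmetric] by simp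
  then have "(\<Prod>y\<leftarrow>ys. x - y) = 0" by (simp add: lin_prod_poly)
  then have xy: "x \<in> set ys" by (auto simp: prod_list_zero_iff)
  have "(\<Prod>y\<leftarrow>ys. [:- y, 1:]) = [:- x, 1:] * (\<Prod>y\<leftarrow>remove1 x ys. [:- y, 1:])"
    by (rule prod_list_map_remove1[OF xy])
  moreover have "(\<Prod>x\<leftarrow>x#xs. [:- x, 1:]) = [:- x, 1:] * (\<Prod>x\<leftarrow>xs. [:- x, 1:])"
    by (simp only: list.map prod_list.Cons)
  ultimately have "[:- x, 1:] * (\<Prod>x\<leftarrow>xs. [:- x, 1:]) = [:- x, 1:] * (\<Prod>y\<leftarrow>remove1 x ys. [:- y, 1:])"
    using Cons.prems by metis
  then have "(\<Prod>x\<leftarrow>xs. [:- x, 1:]) = (\<Prod>y\<leftarrow>remove1 x ys. [:- y, 1:])"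
    by (subst (asm) mult_left_cancel) auto
  from Cons.IH[OF this] xy show ?case by simp
qed

lemma sq_cmod: "cnj z * z = (complex_of_real (cmod z))^2"
  by (metis complex_norm_square mult.commute of_real_power)

lemma sym_real_eigenvalue:
  fixes A :: "real mat"
  assumes A: "A \<in> carrier_mat n n" and sym: "\<And>i j. i < n \<Longrightarrow> j < n \<Longrightarrow> A $$ (i,j) = A $$ (j,i)"
    and ev: "eigenvalue (map_mat complex_of_real A) z"
  shows "Im z = 0"
proof -
  let ?B = "map_mat complex_of_real A"
  from ev obtain v where v: "v \<in> carrier_vec n" "v \<noteq> 0\<^sub>v n" "?B *\<^sub>v v = z \<cdot>\<^sub>v v"
    unfolding eigenvalue_def eigenvector_def using A by auto
  have Bv: "(?B *\<^sub>v v) $ i = (\<Sum>j<n. complex_of_real (A $$ (i,j)) * v $ j)" if "i < n" for i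
    using that A v(1) by (auto simp: scalar_prod_def atLeast0LessThan intro!: sum.cong)
  define S where "S = (\<Sum>i<n. cnj (v $ i) * (?B *\<^sub>v v) $ i)"
  define T where "T = (\<Sum>i<n. cnj (v $ i) * v $ i)"
  have ST: "S = z * T" unfolding S_def T_def using v(1,3)
    by (auto simp: sum_distrib_left algebra_simps intro!: sum.cong)
  have S2: "S = (\<Sum>i<n. \<Sum>j<n. complex_of_real (A $$ (i,j)) * (cnj (v $ i) * v $ j))"
    unfolding S_def by (simp add: Bv sum_distrib_left algebra_simps)
  have "cnj S = (\<Sum>i<n. \<Sum>j<n. complex_of_real (A $$ (i,j)) * (v $ i * cnj (v $ j)))"
    unfolding S2 by (simp add: cnj_sum mult.commute)
  also have "\<dots> = (\<Sum>j<n. \<Sum>i<n. complex_of_real (A $$ (i,j)) * (v $ i * cnj (v $ j)))"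
    by (rule sum.swap)
  also have "\<dots> = S" unfolding S2
    by (intro sum.cong refl) (simp add: sym mult.commute)
  finally have "Im S = 0" by (metis cnj.simps(2) neg_equal_zero)
  have Treal: "T = complex_of_real (\<Sum>i<n. (cmod (v $ i))^2)"
    unfolding T_def of_real_sum by (intro sum.cong refl) (simp add: sq_cmod)
  obtain i where i: "i < n" "v $ i \<noteq> 0" using v(1,2) by (metis carrier_vecD eq_vecI index_zero_vec(1,2))
  have "(\<Sum>i<n. (cmod (v $ i))^2) > 0"
  proof -
    have "(\<Sum>i<n. (cmod (v $ i))^2) \<ge> (cmod (v $ i))^2"
      using i by (intro member_le_sum) auto
    moreover have "(cmod (v $ i))^2 > 0" using i by simp
    ultimately show ?thesis by linarith
  qed
  with \<open>Im S = 0\<close> ST Treal show ?thesis by simp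
qed




lemma prod_list_perm: "mset xs = mset ys \<Longrightarrow> prod_list (map f xs) = (prod_list (map f ys) :: 'a::comm_monoid_mult)"
  by (metis mset_map prod_mset_prod_list)

lemma real_sym_split:
  fixes A :: "real mat"
  assumes A: "A \<in> carrier_mat n n" and sym: "\<And>i j. i < n \<Longrightarrow> j < n \<Longrightarrow> A $$ (i,j) = A $$ (j,i)"
  shows "\<exists>ls. length ls = n \<and> sorted (rev ls) \<and> char_poly A = (\<Prod>x\<leftarrow>ls. [:- x, 1:])"
proof -
  let ?B = "map_mat complex_of_real A"
  have B: "?B \<in> carrier_mat n n" using A by simp
  obtain as where as: "char_poly ?B = (\<Prod>a\<leftarrow>as. [:- a, 1:])" "length as = n"
    using char_poly_factorized[OF B] by blast
  have real: "a = complex_of_real (Re a)" if "a \<in> set as" for a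
  proof -
    have "poly (char_poly ?B) a = 0" unfolding as(1) lin_prod_poly using that
      by (auto simp: prod_list_zero_iff)
    then have "eigenvalue ?B a" using eigenvalue_root_char_poly[OF B] by simp
    from sym_real_eigenvalue[OF A sym this] show ?thesis by (simp add: complex_eq_iff)
  qed
  define rs where "rs = map Re as"
  have "as = map complex_of_real rs" unfolding rs_def using real by (induction as) auto
  have "poly (char_poly A) t = poly (\<Prod>x\<leftarrow>rs. [:- x, 1:]) t" for t
  proof -
    have "complex_of_real (poly (char_poly A) t) = poly (char_poly ?B) (of_real t)"
      unfolding of_real_hom.char_poly_hom[OF A] of_real_hom.poly_map_poly ..
    also have "\<dots> = (\<Prod>x\<leftarrow>rs. of_real t - of_real x)"
      unfolding as(1) lin_prod_poly \<open>as = map complex_of_real rs\<close> by (simp add: o_def)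
    also have "\<dots> = complex_of_real (poly (\<Prod>x\<leftarrow>rs. [:- x, 1:]) t)"
      unfolding lin_prod_poly by (induction rs) auto
    finally show ?thesis by simp
  qed
  then have cp: "char_poly A = (\<Prod>x\<leftarrow>rs. [:- x, 1:])"
    by (simp add: poly_eq_poly_eq_iff[symmetric] fun_eq_iff)
  define ls where "ls = rev (sort rs)"
  have "mset ls = mset rs" unfolding ls_def by simp
  then have "(\<Prod>x\<leftarrow>ls. [:- x, 1:]) = (\<Prod>x\<leftarrow>rs. [:- x, 1:])" by (rule prod_list_perm)
  moreover have "length ls = n" unfolding ls_def rs_def using as(2) by simp
  moreover have "sorted (rev ls)" unfolding ls_def by simp
  ultimately show ?thesis using cp by metis
qed

lemma eigenvalues_desc_eq:
  assumes "length ls = n" "sorted (rev ls)" "char_poly (adj_matrix n E) = (\<Prod>x\<leftarrow>ls. [:- x, 1:])"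
  shows "eigenvalues_desc n E = ls"
  unfolding eigenvalues_desc_def
proof (rule the_equality)
  show "length ls = n \<and> sorted (rev ls) \<and> char_poly (adj_matrix n E) = (\<Prod>x\<leftarrow>ls. [:- x, 1:])"
    using assms by simp
  fix ks assume ks: "length ks = n \<and> sorted (rev ks) \<and> char_poly (adj_matrix n E) = (\<Prod>x\<leftarrow>ks. [:- x, 1:])"
  then have "mset ks = mset ls" using assms(3) lin_prod_mset by metis
  then have "mset (rev ls) = mset (rev ks)" by simp
  from properties_for_sort[OF this] ks assms(2) have "rev ks = rev ls"
    by (metis properties_for_sort)
  then show "ks = ls" by simp
qed



definition diagm :: "nat \<Rightarrow> (nat \<Rightarrow> real) \<Rightarrow> real mat" where
  "diagm n d = mat n n (\<lambda>(i,j). if i = j then d i else 0)"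

lemma diagm_carrier[simp]: "diagm n d \<in> carrier_mat n n" by (simp add: diagm_def)

lemma diagm_mult_left:
  assumes M: "M \<in> carrier_mat n m" and i: "i < n" and j: "j < m"
  shows "(diagm n d * M) $$ (i,j) = d i * M $$ (i,j)"
proof -
  have "(diagm n d * M) $$ (i,j) = (\<Sum>k\<in>{0..<n}. (if i = k then d i else 0) * M $$ (k,j))"
    using M i j by (simp add: diagm_def scalar_prod_def)
  also have "\<dots> = d i * M $$ (i,j)"
    using i by (simp add: if_distrib[of "\<lambda>x. x * _"] cong: if_cong)
  finally show ?thesis .
qed

lemma diagm_mult_right:
  assumes M: "M \<in> carrier_mat m n" and i: "i < m" and j: "j < n"
  shows "(M * diagm n d) $$ (i,j) = M $$ (i,j) * d j"
proof -
  have "(M * diagm n d) $$ (i,j) = (\<Sum>k\<in>{0..<n}. M $$ (i,k) * (if k = j then d j else 0))"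
    using M i j by (auto simp: diagm_def scalar_prod_def intro!: sum.cong)
  also have "\<dots> = M $$ (i,j) * d j"
    using j by (simp add: if_distrib[of "\<lambda>x. _ * x"] cong: if_cong)
  finally show ?thesis .
qed

lemma char_poly_neg_sym:
  fixes A :: "real mat"
  assumes A: "A \<in> carrier_mat n n" and cp: "char_poly A = (\<Prod>x\<leftarrow>ls. [:- x, 1:])"
    and neg: "char_poly (-A) = char_poly A"
  shows "mset ls = mset (map uminus ls)"
proof -
  have "poly (char_poly A) (-t) = (-1)^n * poly (char_poly A) t" for t
  proof -
    have e1: "- char_matrix A (-t) = (-1) \<cdot>\<^sub>m (A + t \<cdot>\<^sub>m 1\<^sub>m n)"
      using A by (intro eq_matI) (auto simp: char_matrix_def)
    have e2: "- char_matrix (-A) t = A + t \<cdot>\<^sub>m 1\<^sub>m n"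
      using A by (intro eq_matI) (auto simp: char_matrix_def)
    have "poly (char_poly A) (-t) = det ((-1) \<cdot>\<^sub>m (A + t \<cdot>\<^sub>m 1\<^sub>m n))"
      unfolding char_poly_matrix[OF A] e1 ..
    also have "\<dots> = (-1)^n * det (A + t \<cdot>\<^sub>m 1\<^sub>m n)"
      using A by (simp add: det_smult)
    also have "det (A + t \<cdot>\<^sub>m 1\<^sub>m n) = poly (char_poly (-A)) t"
      using A by (simp add: char_poly_matrix[of "-A" n] e2)
    finally show ?thesis using neg by simp
  qed
  then have h1: "(\<Prod>x\<leftarrow>ls. -t - x) = (-1)^n * (\<Prod>x\<leftarrow>ls. t - x)" for t
    unfolding cp lin_prod_poly by simp
  have h2: "length ls = n"
    using degree_monic_char_poly[OF A] cp lin_prod_degree by metis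
  have h3: "(\<Prod>x\<leftarrow>ls. -t - x) = (-1)^length ls * (\<Prod>x\<leftarrow>ls. t + x)" for t
    by (induction ls) (simp_all add: algebra_simps)
  have "(\<Prod>x\<leftarrow>ls. t - x) = (\<Prod>x\<leftarrow>ls. t + x)" for t
  proof -
    have "(-1::real)^n \<noteq> 0" by simp
    then show ?thesis using h1[of t] h3[of t] h2 by (metis mult_left_cancel)
  qed
  then have "poly (\<Prod>x\<leftarrow>ls. [:- x, 1:]) t = poly (\<Prod>x\<leftarrow>map uminus ls. [:- x, 1:]) t" for t
    unfolding lin_prod_poly by (simp add: o_def)
  then have "(\<Prod>x\<leftarrow>ls. [:- x, 1:]) = (\<Prod>x\<leftarrow>map uminus ls. [:- x, 1:])"
    by (simp add: poly_eq_poly_eq_iff[symmetric] fun_eq_iff)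
  then show ?thesis by (rule lin_prod_mset)
qed

lemma char_poly_neg_by_diag:
  fixes A :: "real mat"
  assumes A: "A \<in> carrier_mat n n" and d: "\<And>i. i < n \<Longrightarrow> d i * d i = 1"
    and anti: "\<And>i j. i < n \<Longrightarrow> j < n \<Longrightarrow> d i * A $$ (i,j) * d j = - A $$ (i,j)"
  shows "char_poly (-A) = char_poly A"
proof -
  let ?D = "diagm n d"
  have DD: "?D * ?D = 1\<^sub>m n"
  proof (rule eq_matI)
    fix i j assume ij: "i < dim_row (1\<^sub>m n)" "j < dim_col (1\<^sub>m n)"
    then have "(?D * ?D) $$ (i,j) = d i * ?D $$ (i,j)"
      by (intro diagm_mult_left) auto
    then show "(?D * ?D) $$ (i,j) = 1\<^sub>m n $$ (i,j)" using ij d by (simp add: diagm_def)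
  qed (auto simp: diagm_def)
  have DAD: "-A = ?D * A * ?D"
  proof (rule eq_matI)
    fix i j assume ij: "i < dim_row (?D * A * ?D)" "j < dim_col (?D * A * ?D)"
    then have ij': "i < n" "j < n" by (auto simp: diagm_def)
    have DA: "?D * A \<in> carrier_mat n n" using A diagm_carrier[of n d] by (metis mult_carrier_mat)
    have "(?D * A * ?D) $$ (i,j) = (?D * A) $$ (i,j) * d j"
      using diagm_mult_right[OF DA ij'] .
    also have "\<dots> = d i * A $$ (i,j) * d j" using diagm_mult_left[OF A ij'] by simp
    finally show "(-A) $$ (i,j) = (?D * A * ?D) $$ (i,j)" using anti[OF ij'] A ij' by simp
  qed (use A in \<open>auto simp: diagm_def\<close>)
  have "similar_mat (-A) A"
    unfolding similar_mat_def similar_mat_wit_def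
    by (rule exI[of _ ?D], rule exI[of _ ?D]) (use A DD DAD in \<open>auto simp: Let_def diagm_def\<close>)
  then show ?thesis by (rule char_poly_similar)
qed



lemma length_filter_mset: "mset xs = mset ys \<Longrightarrow> length (filter P xs) = length (filter P ys)"
  by (metis mset_filter size_mset)

lemma median_bound:
  fixes ls :: "real list" and P :: "real \<Rightarrow> bool"
  assumes len: "length ls = n" and n: "n \<ge> 1" and sorted: "sorted (rev ls)"
    and symm: "mset ls = mset (map uminus ls)"
    and mono: "\<And>x y. x \<le> y \<Longrightarrow> P x \<Longrightarrow> P y"
    and disj: "\<And>x. \<not> (P x \<and> P (-x))"
    and ex: "\<exists>l\<in>set ls. \<not> P l \<and> \<not> P (-l)"
  shows "\<not> P (ls ! ((n+1) div 2 - 1)) \<and> \<not> P (-(ls ! ((n+2) div 2 - 1)))"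
proof -
  define Ip where "Ip = {i. i < n \<and> P (ls ! i)}"
  define In where "In = {i. i < n \<and> P (-(ls ! i))}"
  have cIp: "card Ip = length (filter P ls)" unfolding Ip_def len[symmetric]
    by (simp add: length_filter_conv_card)
  have "card In = length (filter (P \<circ> uminus) ls)" unfolding In_def len[symmetric]
    by (simp add: length_filter_conv_card)
  also have "\<dots> = length (filter P (map uminus ls))" by (simp add: filter_map)
  also have "\<dots> = length (filter P ls)" using length_filter_mset[OF symm] by simp
  finally have cIn: "card In = card Ip" using cIp by simp
  from ex obtain i0 where i0: "i0 < n" "\<not> P (ls ! i0)" "\<not> P (-(ls ! i0))"
    using len by (metis in_set_conv_nth)
  have sub: "Ip \<union> In \<subseteq> {0..<n} - {i0}" using i0 unfolding Ip_def In_def by auto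
  have dis: "Ip \<inter> In = {}" using disj unfolding Ip_def In_def by auto
  have "card Ip + card In = card (Ip \<union> In)"
    using dis by (simp add: card_Un_disjoint Ip_def In_def)
  also have "\<dots> \<le> card ({0..<n} - {i0})" by (rule card_mono[OF _ sub]) simp
  also have "\<dots> = n - 1" using i0 by simp
  finally have bound: "2 * card Ip \<le> n - 1" using cIn by simp
  have A: "\<not> P (ls ! ((n+1) div 2 - 1))"
  proof
    let ?k = "(n+1) div 2 - 1"
    assume Pk: "P (ls ! ?k)"
    have "{0..?k} \<subseteq> Ip" unfolding Ip_def
    proof safe
      fix i assume "i \<in> {0..?k}"
      then have i: "i \<le> ?k" by simp
      then show "i < n" using n by linarith
      show "P (ls ! i)" using mono[OF sorted_rev_nth_mono[OF sorted i] Pk] len n by linarith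
    qed
    then have "card {0..?k} \<le> card Ip" by (rule card_mono[rotated]) (simp add: Ip_def)
    with bound n show False by simp
  qed
  have B: "\<not> P (-(ls ! ((n+2) div 2 - 1)))"
  proof
    let ?k = "(n+2) div 2 - 1"
    assume Pk: "P (-(ls ! ?k))"
    have "{?k..<n} \<subseteq> In" unfolding In_def
    proof safe
      fix i assume "i \<in> {?k..<n}"
      then have i: "?k \<le> i" "i < n" by auto
      then show "i < n" by simp
      have "ls ! i \<le> ls ! ?k" using sorted_rev_nth_mono[OF sorted i(1)] i(2) len by simp
      then show "P (-(ls ! i))" using mono[OF _ Pk] by simp
    qed
    then have "card {?k..<n} \<le> card In" by (rule card_mono[rotated]) (simp add: In_def)
    with bound n cIn show False by simp
  qed
  from A B show ?thesis ..
qed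



definition qf :: "(nat \<Rightarrow> nat \<Rightarrow> real) \<Rightarrow> nat \<Rightarrow> (nat \<Rightarrow> real) \<Rightarrow> real" where
  "qf m n w = (\<Sum>i<n. \<Sum>j<n. m i j * w i * w j)"

definition nrm :: "nat \<Rightarrow> (nat \<Rightarrow> real) \<Rightarrow> real" where
  "nrm n w = (\<Sum>i<n. (w i)^2)"

lemma nrm_nonneg: "nrm n w \<ge> 0" unfolding nrm_def by (intro sum_nonneg) auto

lemma nrm_zero: "nrm n w = 0 \<Longrightarrow> i < n \<Longrightarrow> w i = 0"
  unfolding nrm_def by (subst (asm) sum_nonneg_eq_0_iff) auto

lemma nrm_ge: "i < n \<Longrightarrow> (w i)^2 \<le> nrm n w"
  unfolding nrm_def by (rule member_le_sum) auto

lemma qf_zero: "nrm n w = 0 \<Longrightarrow> qf m n w = 0"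
  unfolding qf_def using nrm_zero[of n w] by simp

lemma qf_cong: "(\<And>i. i < n \<Longrightarrow> v i = w i) \<Longrightarrow> qf m n v = qf m n w"
  unfolding qf_def by simp

lemma nrm_cong: "(\<And>i. i < n \<Longrightarrow> v i = w i) \<Longrightarrow> nrm n v = nrm n w"
  unfolding nrm_def by simp

lemma qf_scale: "qf m n (\<lambda>i. c * w i) = c^2 * qf m n w"
  unfolding qf_def power2_eq_square by (simp add: sum_distrib_left algebra_simps)

lemma nrm_scale: "nrm n (\<lambda>i. c * w i) = c^2 * nrm n w"
  unfolding nrm_def by (simp add: sum_distrib_left algebra_simps power2_eq_square)

lemma rayleigh_min_exists:
  assumes n: "n \<ge> 1"
  shows "\<exists>u. nrm n u = 1 \<and> (\<forall>w. qf m n u * nrm n w \<le> qf m n w)"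
proof -
  define K where "K = (\<lambda>i::nat. if i < n then {-1..1::real} else {0})"
  define S where "S = Pi UNIV K \<inter> {w. nrm n w = 1}"
  have "compactin (product_topology (\<lambda>_. euclidean) UNIV) (PiE UNIV K)"
    unfolding compactin_PiE K_def by auto
  then have "compact (Pi UNIV K)"
    by (simp add: euclidean_product_topology PiE_UNIV_domain)
  moreover have "closed {w. nrm n w = 1}"
    unfolding nrm_def
    by (intro closed_Collect_eq continuous_on_sum continuous_intros continuous_on_product_coordinates)
  ultimately have cS: "compact S" unfolding S_def by (rule compact_Int_closed)
  have "(\<Sum>i<n. ((if i = 0 then 1 else 0::real))^2) = (\<Sum>i<n. if i = 0 then 1 else 0)"
    by (intro sum.cong) auto
  also have "\<dots> = 1" using n by simp
  finally have "(\<lambda>i. if i = 0 then 1 else 0) \<in> S"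
    using n unfolding S_def K_def nrm_def by auto
  then have ne: "S \<noteq> {}" by auto
  have cont: "continuous_on S (qf m n)"
    unfolding qf_def
    by (intro continuous_on_sum continuous_intros continuous_on_subset[OF continuous_on_product_coordinates]) auto
  obtain u where u: "u \<in> S" and umin: "\<And>y. y \<in> S \<Longrightarrow> qf m n u \<le> qf m n y"
    using continuous_attains_inf[OF cS ne cont] by blast
  have "qf m n u * nrm n w \<le> qf m n w" for w
  proof (cases "nrm n w = 0")
    case True then show ?thesis by (simp add: qf_zero)
  next
    case False
    then have pos: "nrm n w > 0" using nrm_nonneg[of n w] by simp
    define r where "r = sqrt (nrm n w)"
    have r: "r > 0" "r^2 = nrm n w" using pos unfolding r_def by auto
    define w' where "w' = (\<lambda>i. if i < n then (1/r) * w i else 0)"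
    have q': "qf m n w' = (1/r)^2 * qf m n w"
      by (subst qf_scale[symmetric]) (rule qf_cong, simp add: w'_def)
    have n': "nrm n w' = (1/r)^2 * nrm n w"
      by (subst nrm_scale[symmetric]) (rule nrm_cong, simp add: w'_def)
    have "nrm n w' = 1" using n' r pos by (simp add: power_divide)
    moreover have "w' \<in> Pi UNIV K"
    proof -
      have "\<bar>w' i\<bar> \<le> 1" if "i < n" for i
      proof -
        have "(w' i)^2 \<le> 1" using nrm_ge[OF that, of w'] \<open>nrm n w' = 1\<close> by simp
        then show ?thesis by (simp add: abs_square_le_1)
      qed
      note ab = this
      have "w' i \<in> K i" for i
      proof (cases "i < n")
        case True
        have "\<bar>w' i\<bar> \<le> 1" by (rule ab[OF True])
        then show ?thesis using True unfolding K_def by (simp add: abs_le_iff)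
      qed (simp add: K_def w'_def)
      then show ?thesis by auto
    qed
    ultimately have "w' \<in> S" unfolding S_def by simp
    from umin[OF this] have "qf m n u \<le> qf m n w / nrm n w"
      using q' r by (simp add: power_divide)
    then show ?thesis using pos by (simp add: pos_le_divide_eq)
  qed
  moreover have "nrm n u = 1" using u unfolding S_def by simp
  ultimately show ?thesis by blast
qed



lemma qf_expand:
  "qf m n (\<lambda>i. u i + t * r i) = qf m n u + t * (\<Sum>i<n. \<Sum>j<n. m i j * (u i * r j + r i * u j)) + t^2 * qf m n r"
  unfolding qf_def power2_eq_square
  by (simp add: algebra_simps sum.distrib sum_distrib_left)

lemma nrm_expand:
  "nrm n (\<lambda>i. u i + t * r i) = nrm n u + 2 * t * (\<Sum>i<n. u i * r i) + t^2 * nrm n r"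
  unfolding nrm_def power2_eq_square
  by (simp add: algebra_simps sum.distrib sum_distrib_left)

lemma rayleigh_min_eigen:
  assumes sym: "\<And>i j. i < n \<Longrightarrow> j < n \<Longrightarrow> m i j = m j i"
    and nu: "nrm n u = 1" and mn: "\<And>w. qf m n u * nrm n w \<le> qf m n w"
    and i: "i < n"
  shows "(\<Sum>j<n. m i j * u j) = qf m n u * u i"
proof -
  define c where "c = qf m n u"
  define r where "r = (\<lambda>i. (\<Sum>j<n. m i j * u j) - c * u i)"
  define R where "R = nrm n r"
  define K where "K = qf m n r - c * nrm n r"
  have mid: "(\<Sum>i<n. \<Sum>j<n. m i j * (u i * r j + r i * u j)) = 2 * (\<Sum>i<n. r i * (\<Sum>j<n. m i j * u j))"
  proof -
    have "(\<Sum>i<n. \<Sum>j<n. m i j * (u i * r j)) = (\<Sum>j<n. \<Sum>i<n. m i j * (u i * r j))"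
      by (rule sum.swap)
    also have "\<dots> = (\<Sum>j<n. \<Sum>i<n. m j i * (r j * u i))"
      by (intro sum.cong refl) (simp add: sym mult.commute)
    finally have "(\<Sum>i<n. \<Sum>j<n. m i j * (u i * r j)) = (\<Sum>i<n. \<Sum>j<n. m i j * (r i * u j))" .
    then show ?thesis
      by (simp add: algebra_simps sum.distrib sum_distrib_left)
  qed
  have key: "(\<Sum>i<n. r i * (\<Sum>j<n. m i j * u j)) - c * (\<Sum>i<n. u i * r i) = R"
    unfolding R_def nrm_def r_def power2_eq_square
    by (simp add: algebra_simps sum_subtractf sum_distrib_left sum.distrib)
  have ineq: "0 \<le> 2 * t * R + t^2 * K" for t
  proof -
    have "c * nrm n (\<lambda>i. u i + t * r i) \<le> qf m n (\<lambda>i. u i + t * r i)"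
      using mn unfolding c_def by blast
    then show ?thesis
      unfolding qf_expand nrm_expand mid K_def nu c_def[symmetric] using key
      by (simp add: algebra_simps)
  qed
  have "R \<le> 0"
  proof (rule ccontr)
    assume "\<not> R \<le> 0"
    then have Rp: "R > 0" by simp
    define t where "t = - R / (\<bar>K\<bar> + 1)"
    have tn: "t < 0" using Rp unfolding t_def by (simp add: divide_pos_pos)
    have "t^2 * K \<le> t^2 * \<bar>K\<bar>" by (intro mult_left_mono) auto
    moreover have "t * \<bar>K\<bar> \<ge> - R"
    proof -
      have "t * \<bar>K\<bar> = - R * (\<bar>K\<bar> / (\<bar>K\<bar> + 1))" unfolding t_def by simp
      moreover have "\<bar>K\<bar> / (\<bar>K\<bar> + 1) \<le> 1" by simp
      ultimately show ?thesis using Rp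
        by (metis mult_left_le mult_minus_left neg_le_iff_le abs_ge_zero add_nonneg_pos divide_nonneg_pos less_eq_real_def zero_less_one)
    qed
    then have "t^2 * \<bar>K\<bar> \<le> - t * R" using tn unfolding power2_eq_square
      by (metis mult.assoc mult_le_cancel_left_neg mult_minus_right mult.commute)
    ultimately have "2 * t * R + t^2 * K \<le> t * R" by (simp add: algebra_simps)
    also have "t * R < 0" using tn Rp by (simp add: mult_neg_pos)
    finally show False using ineq[of t] by simp
  qed
  then have "R = 0" using nrm_nonneg[of n r] unfolding R_def by simp
  then have "r i = 0" using nrm_zero i unfolding R_def by blast
  then show ?thesis unfolding r_def c_def by simp
qed



definition adj :: "(nat \<Rightarrow> nat \<Rightarrow> bool) \<Rightarrow> nat \<Rightarrow> nat \<Rightarrow> real" where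
  "adj E i j = (if E i j then 1 else 0)"

definition msq :: "nat \<Rightarrow> (nat \<Rightarrow> nat \<Rightarrow> bool) \<Rightarrow> nat \<Rightarrow> nat \<Rightarrow> nat \<Rightarrow> real" where
  "msq n E d i j = (\<Sum>k<n. adj E i k * adj E k j) - (if i = j then real d else 0)"

lemma adj_matrix_carrier: "adj_matrix n E \<in> carrier_mat n n"
  by (simp add: adj_matrix_def)

lemma adj_matrix_index: "i < n \<Longrightarrow> j < n \<Longrightarrow> adj_matrix n E $$ (i,j) = adj E i j"
  by (simp add: adj_matrix_def adj_def)

lemma adj_sym: "simple_graph n E \<Longrightarrow> i < n \<Longrightarrow> j < n \<Longrightarrow> adj E i j = adj E j i"
  unfolding simple_graph_def adj_def by metis

lemma jnf_eig:
  assumes i0: "i0 < n" "f i0 \<noteq> 0"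
    and ev: "\<And>i. i < n \<Longrightarrow> (\<Sum>k<n. adj E i k * f k) = \<mu> * f i"
  shows "poly (char_poly (adj_matrix n E)) \<mu> = 0"
proof -
  let ?A = "adj_matrix n E"
  let ?v = "vec n f"
  have "?A *\<^sub>v ?v = \<mu> \<cdot>\<^sub>v ?v"
  proof (rule eq_vecI)
    fix i assume "i < dim_vec (\<mu> \<cdot>\<^sub>v ?v)"
    then have i: "i < n" by simp
    have "(?A *\<^sub>v ?v) $ i = (\<Sum>k\<in>{0..<n}. ?A $$ (i,k) * f k)"
      using i adj_matrix_carrier[of n E] by (auto simp: scalar_prod_def intro!: sum.cong)
    also have "\<dots> = (\<Sum>k<n. adj E i k * f k)"
      using i by (auto simp: adj_matrix_index atLeast0LessThan intro!: sum.cong)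
    finally show "(?A *\<^sub>v ?v) $ i = (\<mu> \<cdot>\<^sub>v ?v) $ i" using ev[OF i] i by simp
  qed (use adj_matrix_carrier[of n E] in auto)
  moreover have "?v \<noteq> 0\<^sub>v n" using i0 by (metis index_vec index_zero_vec(1))
  moreover have "?v \<in> carrier_vec n" by simp
  moreover have "dim_row ?A = n" by (simp add: adj_matrix_def)
  ultimately have "eigenvector ?A ?v \<mu>"
    unfolding eigenvector_def by simp
  then have "eigenvalue ?A \<mu>" unfolding eigenvalue_def by blast
  then show ?thesis using eigenvalue_root_char_poly[OF adj_matrix_carrier] by simp
qed

lemma eig_from_msq:
  assumes sg: "simple_graph n E" and nu: "nrm n u = 1"
    and ev: "\<And>i. i < n \<Longrightarrow> (\<Sum>j<n. msq n E d i j * u j) = c * u i"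
  shows "\<exists>\<mu>. poly (char_poly (adj_matrix n E)) \<mu> = 0 \<and> \<mu>^2 = d + c"
proof -
  define Au where "Au = (\<lambda>k. \<Sum>j<n. adj E k j * u j)"
  have AAu: "(\<Sum>k<n. adj E i k * Au k) = (d + c) * u i" if i: "i < n" for i
  proof -
    have "(\<Sum>j<n. msq n E d i j * u j) = (\<Sum>j<n. (\<Sum>k<n. adj E i k * adj E k j) * u j - (if i = j then real d else 0) * u j)"
      unfolding msq_def by (simp add: algebra_simps)
    also have "\<dots> = (\<Sum>j<n. (\<Sum>k<n. adj E i k * adj E k j) * u j) - (\<Sum>j<n. (if i = j then real d else 0) * u j)"
      by (rule sum_subtractf)
    also have "(\<Sum>j<n. (if i = j then real d else 0) * u j) = d * u i"
      using i by (simp add: if_distrib[of "\<lambda>x. x * _"] cong: if_cong)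
    also have "(\<Sum>j<n. (\<Sum>k<n. adj E i k * adj E k j) * u j) = (\<Sum>j<n. \<Sum>k<n. adj E i k * adj E k j * u j)"
      by (simp add: sum_distrib_right)
    finally have "(\<Sum>j<n. msq n E d i j * u j) = (\<Sum>j<n. \<Sum>k<n. adj E i k * adj E k j * u j) - d * u i" .
    also have "(\<Sum>j<n. \<Sum>k<n. adj E i k * adj E k j * u j) = (\<Sum>k<n. adj E i k * Au k)"
      unfolding Au_def by (subst sum.swap) (simp add: sum_distrib_left mult.assoc)
    finally show ?thesis using ev[OF i] by (simp add: algebra_simps)
  qed
  have "(\<Sum>i<n. u i * (\<Sum>k<n. adj E i k * Au k)) = (\<Sum>k<n. Au k * Au k)"
  proof -
    have "(\<Sum>i<n. u i * (\<Sum>k<n. adj E i k * Au k)) = (\<Sum>k<n. \<Sum>i<n. adj E i k * u i * Au k)"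
      by (subst sum.swap) (simp add: sum_distrib_left algebra_simps)
    also have "\<dots> = (\<Sum>k<n. Au k * Au k)"
      unfolding Au_def by (intro sum.cong refl) (simp add: sum_distrib_right adj_sym[OF sg] algebra_simps)
    finally show ?thesis .
  qed
  moreover have "(\<Sum>i<n. u i * (\<Sum>k<n. adj E i k * Au k)) = d + c"
  proof -
    have "(\<Sum>i<n. u i * (\<Sum>k<n. adj E i k * Au k)) = (\<Sum>i<n. (d + c) * (u i)^2)"
      by (intro sum.cong refl) (simp add: AAu power2_eq_square)
    also have "\<dots> = d + c" using nu unfolding nrm_def by (simp add: sum_distrib_left[symmetric])
    finally show ?thesis .
  qed
  moreover have "(\<Sum>k<n. Au k * Au k) \<ge> 0" by (intro sum_nonneg) simp
  ultimately have dc: "d + c \<ge> 0" by linarith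
  define t where "t = sqrt (d + c)"
  have t2: "t^2 = d + c" using dc unfolding t_def by simp
  define w where "w = (\<lambda>i. Au i + t * u i)"
  have wev: "(\<Sum>k<n. adj E i k * w k) = t * w i" if i: "i < n" for i
  proof -
    have "(\<Sum>k<n. adj E i k * w k) = (\<Sum>k<n. adj E i k * Au k) + t * Au i"
      unfolding w_def Au_def by (simp add: algebra_simps sum.distrib sum_distrib_left)
    also have "\<dots> = t * w i" unfolding AAu[OF i] w_def t2[symmetric]
      by (simp add: algebra_simps power2_eq_square)
    finally show ?thesis .
  qed
  show ?thesis
  proof (cases "\<exists>i<n. w i \<noteq> 0")
    case True
    then obtain i0 where "i0 < n" "w i0 \<noteq> 0" by blast
    have "poly (char_poly (adj_matrix n E)) t = 0"
      by (rule jnf_eig[of i0 n w E t]) (use \<open>i0 < n\<close> \<open>w i0 \<noteq> 0\<close> wev in auto)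
    with t2 show ?thesis by blast
  next
    case False
    then have Au: "Au i = (-t) * u i" if "i < n" for i using that unfolding w_def by force
    have "\<exists>i0<n. u i0 \<noteq> 0"
    proof (rule ccontr)
      assume "\<not> ?thesis"
      then have "nrm n u = 0" unfolding nrm_def by simp
      with nu show False by simp
    qed
    then obtain i0 where i0: "i0 < n" "u i0 \<noteq> 0" by blast
    have "poly (char_poly (adj_matrix n E)) (-t) = 0"
      by (rule jnf_eig[of i0 n u E "-t"]) (use i0 Au in \<open>auto simp: Au_def\<close>)
    with t2 show ?thesis by (intro exI[of _ "-t"]) simp
  qed
qed



lemma sum_indicator_card: "(\<Sum>k<(n::nat). if P k then 1 else 0 :: real) = real (card {k. k < n \<and> P k})"
proof -
  have "(\<Sum>k\<in>{k\<in>{..<n}. P k}. 1) = (\<Sum>k<n. if P k then 1 else 0 :: real)"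
    by (rule sum.inter_filter) simp
  moreover have "{k\<in>{..<n}. P k} = {k. k < n \<and> P k}" by auto
  ultimately show ?thesis by simp
qed

lemma deg_sum: "real (degree n E x) = (\<Sum>k<n. adj E x k)"
  unfolding degree_def adj_def by (rule sum_indicator_card[symmetric])

lemma msq_diag:
  assumes sg: "simple_graph n E" and x: "x < n"
  shows "msq n E d x x = real (degree n E x) - d"
proof -
  have "(\<Sum>k<n. adj E x k * adj E k x) = (\<Sum>k<n. adj E x k)"
    by (intro sum.cong refl) (use adj_sym[OF sg x] in \<open>auto simp: adj_def\<close>)
  then show ?thesis unfolding msq_def deg_sum by simp
qed

lemma msq_sym:
  assumes sg: "simple_graph n E" and i: "i < n" and j: "j < n"
  shows "msq n E d i j = msq n E d j i"
proof -
  have "(\<Sum>k<n. adj E i k * adj E k j) = (\<Sum>k<n. adj E j k * adj E k i)"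
    by (intro sum.cong refl) (simp add: adj_sym[OF sg i] adj_sym[OF sg j] mult.commute)
  then show ?thesis unfolding msq_def by auto
qed

definition ev :: "nat \<Rightarrow> nat \<Rightarrow> real" where "ev x = (\<lambda>j. if j = x then 1 else 0)"

lemma sum_ev: "x < n \<Longrightarrow> (\<Sum>j<n. f j * ev x j) = f x"
  unfolding ev_def by (simp add: if_distrib[of "\<lambda>y. _ * y"] cong: if_cong)

lemma nrm_ev: "x < n \<Longrightarrow> nrm n (ev x) = 1"
  unfolding nrm_def ev_def by (simp add: if_distrib[of "\<lambda>y. y^2"] cong: if_cong)

lemma qf_ev: "x < n \<Longrightarrow> qf m n (ev x) = m x x"
proof -
  assume x: "x < n"
  have "qf m n (ev x) = (\<Sum>i<n. \<Sum>j<n. (m i j * ev x i) * ev x j)"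
    unfolding qf_def ..
  also have "\<dots> = (\<Sum>i<n. m i x * ev x i)"
    by (intro sum.cong refl) (rule sum_ev[OF x])
  also have "\<dots> = m x x" using x by (simp add: sum_ev)
  finally show ?thesis .
qed

lemma reachable_sym:
  assumes sg: "simple_graph n E" and r: "reachable n E a b"
  shows "reachable n E b a"
  using r unfolding reachable_def
proof (induction rule: rtranclp_induct)
  case (step y z)
  then have "z < n \<and> y < n \<and> E z y" using sg unfolding simple_graph_def by blast
  then show ?case using step.IH by (rule converse_rtranclp_into_rtranclp)
qed simp

lemma reachable_step:
  "reachable n E a b \<Longrightarrow> b < n \<Longrightarrow> c < n \<Longrightarrow> E b c \<Longrightarrow> reachable n E a c"
  unfolding reachable_def by (rule rtranclp.rtrancl_into_rtrancl) auto



lemma reachable_trans: "reachable n E a b \<Longrightarrow> reachable n E b c \<Longrightarrow> reachable n E a c"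
  unfolding reachable_def by (rule rtranclp_trans)

lemma common_neighbors_false:
  assumes sg: "simple_graph n E"
    and common: "\<And>x i k. x < n \<Longrightarrow> degree n E x = d \<Longrightarrow> i < n \<Longrightarrow> i \<noteq> x \<Longrightarrow> k < n \<Longrightarrow> \<not> (E i k \<and> E k x)"
    and x0: "x0 < n" "degree n E x0 = d" and dmin: "\<And>v. v < n \<Longrightarrow> d \<le> degree n E v"
    and H: "d \<ge> 2 \<or> (d = 1 \<and> (\<exists>C. is_component n E C \<and> min_degree_on E C = 1 \<and> \<not> iso_K2_on E C))"
  shows False
proof -
  have Esym: "\<And>a b. a < n \<Longrightarrow> b < n \<Longrightarrow> E a b \<Longrightarrow> E b a" and Eirr: "\<And>a. a < n \<Longrightarrow> \<not> E a a"
    using sg unfolding simple_graph_def by blast+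
  have fin: "finite {w. w < n \<and> E v w}" for v by simp
  from H show False
  proof
    assume d2: "d \<ge> 2"
    have "card {w. w < n \<and> E x0 w} \<ge> 2" using x0 d2 unfolding degree_def by simp
    then have "{w. w < n \<and> E x0 w} \<noteq> {}" by (intro notI) simp
    then obtain y where y: "y < n" "E x0 y" by blast
    have cy: "card {w. w < n \<and> E y w} \<ge> 2" using dmin[OF y(1)] d2 unfolding degree_def by simp
    have "\<exists>z. z < n \<and> E y z \<and> z \<noteq> x0"
    proof (rule ccontr)
      assume "\<not> ?thesis"
      then have "{w. w < n \<and> E y w} \<subseteq> {x0}" by auto
      then have "card {w. w < n \<and> E y w} \<le> card {x0}" by (intro card_mono) auto
      then have "card {w. w < n \<and> E y w} \<le> 1" by simp
      with cy show False by simp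
    qed
    then obtain z where z: "z < n" "E y z" "z \<noteq> x0" by blast
    have "E z y" using Esym[OF y(1) z(1) z(2)] .
    moreover have "E y x0" using Esym[OF x0(1) y(1) y(2)] .
    ultimately show False using common[OF x0 z(1) z(3) y(1)] by blast
  next
    assume "d = 1 \<and> (\<exists>C. is_component n E C \<and> min_degree_on E C = 1 \<and> \<not> iso_K2_on E C)"
    then obtain C where d1: "d = 1" and C: "is_component n E C" "min_degree_on E C = 1" "\<not> iso_K2_on E C"
      by blast
    from C(1) obtain v0 where v0: "v0 < n" "C = component n E v0" unfolding is_component_def by blast
    have Csub: "C \<subseteq> {..<n}" unfolding v0(2) component_def by auto
    then have finC: "finite C" by (rule finite_subset) simp
    have "v0 \<in> C" unfolding v0(2) component_def reachable_def using v0(1) by simp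
    then have "(\<lambda>v. card {w \<in> C. E v w}) ` C \<noteq> {}" by blast
    from Min_in[OF finite_imageI[OF finC] this] C(2)
    obtain x where xC: "x \<in> C" and cx: "card {w \<in> C. E x w} = 1"
      unfolding min_degree_on_def by auto
    have xn: "x < n" and rx: "reachable n E v0 x" using xC unfolding v0(2) component_def by auto
    have NC: "{w \<in> C. E x w} = {w. w < n \<and> E x w}"
    proof
      show "{w \<in> C. E x w} \<subseteq> {w. w < n \<and> E x w}" using Csub by auto
      show "{w. w < n \<and> E x w} \<subseteq> {w \<in> C. E x w}"
        using reachable_step[OF rx xn] unfolding v0(2) component_def by auto
    qed
    have degx: "degree n E x = d" using cx d1 NC unfolding degree_def by simp
    obtain y where Ny: "{w. w < n \<and> E x w} = {y}" using cx NC by (metis card_1_singletonE)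
    then have y: "y < n" "E x y" by auto
    have Nx: "z = x" if "z < n" "E y z" for z
    proof (rule ccontr)
      assume "z \<noteq> x"
      moreover have "E z y" using Esym[OF y(1) that] .
      moreover have "E y x" using Esym[OF xn y(1) y(2)] .
      ultimately show False using common[OF xn degx that(1) _ y(1)] by blast
    qed
    have xy: "x \<noteq> y" using Eirr[OF xn] y(2) by auto
    have reach_xy: "w \<in> {x, y}" if "reachable n E x w" for w
      using that unfolding reachable_def
    proof (induction rule: rtranclp_induct)
      case (step b c)
      then show ?case using Ny Nx by auto
    qed simp
    have "C = {x, y}"
    proof
      show "C \<subseteq> {x, y}"
      proof
        fix w assume "w \<in> C"
        then have "reachable n E v0 w" unfolding v0(2) component_def by auto
        moreover have "reachable n E x v0" by (rule reachable_sym[OF sg rx])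
        ultimately have "reachable n E x w" using reachable_trans by blast
        then show "w \<in> {x, y}" by (rule reach_xy)
      qed
      have "reachable n E v0 y" by (rule reachable_step[OF rx xn y])
      then have "y \<in> C" unfolding v0(2) component_def using y(1) by simp
      then show "{x, y} \<subseteq> C" using xC by simp
    qed
    then have "iso_K2_on E C" unfolding iso_K2_on_def using xy y(2) by blast
    with C(3) show False by simp
  qed
qed



theorem theorem2p5:
  fixes n :: nat and E :: "nat \<Rightarrow> nat \<Rightarrow> bool"
  assumes "n \<ge> 1" and "simple_graph n E" and "bipartite n E"
  shows "HL_index n E \<le> sqrt (real (min_degree n E)) \<and>
        ((min_degree n E \<ge> 2 \<or>
         (min_degree n E = 1 \<and> (\<exists>C. is_component n E C \<and> min_degree_on E C = 1 \<and> \<not> iso_K2_on E C)))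
         \<longrightarrow> HL_index n E < sqrt (real (min_degree n E)))"
proof -
  note n = assms(1) and sg = assms(2) and bip = assms(3)
  let ?A = "adj_matrix n E"
  let ?d = "min_degree n E"
  define s where "s = sqrt (real ?d)"
  have A: "?A \<in> carrier_mat n n" by (rule adj_matrix_carrier)
  have symA: "?A $$ (i,j) = ?A $$ (j,i)" if "i < n" "j < n" for i j
    using that by (simp add: adj_matrix_index adj_sym[OF sg])
  obtain ls where ls: "length ls = n" "sorted (rev ls)" "char_poly ?A = (\<Prod>x\<leftarrow>ls. [:- x, 1:])"
    using real_sym_split[OF A symA] by blast
  have evd: "eigenvalues_desc n E = ls" by (rule eigenvalues_desc_eq[OF ls])
  obtain X where X: "\<And>u v. u < n \<Longrightarrow> v < n \<Longrightarrow> E u v \<Longrightarrow> (u \<in> X \<longleftrightarrow> v \<notin> X)"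
    using bip unfolding bipartite_def by blast
  define dg where "dg = (\<lambda>i::nat. if i \<in> X then 1 else -1 :: real)"
  have negcp: "char_poly (-?A) = char_poly ?A"
  proof (rule char_poly_neg_by_diag[OF A])
    show "dg i * dg i = 1" for i unfolding dg_def by simp
    show "dg i * ?A $$ (i,j) * dg j = - ?A $$ (i,j)" if "i < n" "j < n" for i j
      using that X[OF that] by (auto simp: adj_matrix_index adj_def dg_def)
  qed
  have symm: "mset ls = mset (map uminus ls)" by (rule char_poly_neg_sym[OF A ls(3) negcp])
  have inls: "\<mu> \<in> set ls" if "poly (char_poly ?A) \<mu> = 0" for \<mu>
    using that unfolding ls(3) lin_prod_poly by (auto simp: prod_list_zero_iff)
  have finD: "finite (degree n E ` {0..<n})" by simp
  have neD: "degree n E ` {0..<n} \<noteq> {}" using n by auto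
  obtain x0 where x0: "x0 < n" "degree n E x0 = ?d"
    using Min_in[OF finD neD] unfolding min_degree_def by auto
  have dmin: "?d \<le> degree n E v" if "v < n" for v
    unfolding min_degree_def using that by (intro Min_le) auto
  define mm where "mm = msq n E ?d"
  have msym: "mm i j = mm j i" if "i < n" "j < n" for i j
    unfolding mm_def by (rule msq_sym[OF sg that])
  have qfev: "qf mm n (ev x) = 0" if "x < n" "degree n E x = ?d" for x
    using that by (simp add: qf_ev mm_def msq_diag[OF sg])
  obtain u where u: "nrm n u = 1" "\<And>w. qf mm n u * nrm n w \<le> qf mm n w"
    using rayleigh_min_exists[OF n] by blast
  define c where "c = qf mm n u"
  have c0: "c \<le> 0" using u(2)[of "ev x0"] qfev[OF x0] nrm_ev[OF x0(1)] unfolding c_def by simp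
  have ueig: "(\<Sum>j<n. mm i j * u j) = c * u i" if "i < n" for i
    unfolding c_def by (rule rayleigh_min_eigen[OF msym u that])
  obtain \<mu> where mu: "poly (char_poly ?A) \<mu> = 0" "\<mu>^2 = ?d + c"
    using eig_from_msq[OF sg u(1) ueig[unfolded mm_def]] by blast
  have mu_in: "\<mu> \<in> set ls" by (rule inls[OF mu(1)])
  define k1 where "k1 = (n + 1) div 2 - 1"
  define k2 where "k2 = (n + 2) div 2 - 1"
  have HL: "HL_index n E = max \<bar>ls ! k1\<bar> \<bar>ls ! k2\<bar>"
    unfolding HL_index_def Let_def evd k1_def k2_def ..
  have k12: "ls ! k2 \<le> ls ! k1"
    using sorted_rev_nth_mono[OF ls(2), of k1 k2] n ls(1) unfolding k1_def k2_def by simp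
  have s0: "s \<ge> 0" unfolding s_def by simp
  have part1: "HL_index n E \<le> s"
  proof -
    have "\<bar>\<mu>\<bar> \<le> s"
    proof -
      have "\<bar>\<mu>\<bar> = sqrt (\<mu>^2)" by simp
      also have "\<dots> \<le> s" unfolding s_def using mu(2) c0 by (intro real_sqrt_le_mono) simp
      finally show ?thesis .
    qed
    then have ex: "\<exists>l\<in>set ls. \<not> l > s \<and> \<not> -l > s" using mu_in by (intro bexI[of _ \<mu>]) auto
    have "\<not> ls ! k1 > s \<and> \<not> -(ls ! k2) > s"
      unfolding k1_def k2_def
      by (rule median_bound[OF ls(1) n ls(2) symm, of "\<lambda>x. x > s"]) (use s0 ex in auto)
    then show ?thesis unfolding HL using k12 by auto
  qed
  have part2: "HL_index n E < s"
    if H: "?d \<ge> 2 \<or> (?d = 1 \<and> (\<exists>C. is_component n E C \<and> min_degree_on E C = 1 \<and> \<not> iso_K2_on E C))"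
  proof -
    have d1: "?d \<ge> 1" using H by auto
    have sp: "s > 0" unfolding s_def using d1 by simp
    have ex: "\<exists>l\<in>set ls. \<bar>l\<bar> < s"
    proof (rule ccontr)
      assume "\<not> ?thesis"
      then have "\<bar>\<mu>\<bar> \<ge> s" using mu_in by auto
      then have "\<mu>^2 \<ge> s^2" using s0 by (metis abs_ge_zero power2_abs power_mono)
      then have "c \<ge> 0" using mu(2) unfolding s_def by simp
      with c0 have c00: "c = 0" by simp
      have common: "\<not> (E i k \<and> E k x)"
        if x: "x < n" "degree n E x = ?d" and i: "i < n" "i \<noteq> x" and k: "k < n" for x i k
      proof -
        have "(\<Sum>j<n. mm i j * ev x j) = qf mm n (ev x) * ev x i"
        proof (rule rayleigh_min_eigen[OF msym nrm_ev[OF x(1)] _ i(1)])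
          fix w show "qf mm n (ev x) * nrm n w \<le> qf mm n w"
            using u(2)[of w] c00 qfev[OF x] unfolding c_def by simp
        qed
        then have "mm i x = 0" using sum_ev[OF x(1)] qfev[OF x] by simp
        then have "(\<Sum>k<n. adj E i k * adj E k x) = 0" using i(2) unfolding mm_def msq_def by simp
        then have "adj E i k * adj E k x = 0"
          using k by (subst (asm) sum_nonneg_eq_0_iff) (auto simp: adj_def)
        then show ?thesis unfolding adj_def by (auto split: if_splits)
      qed
      show False
        by (rule common_neighbors_false[OF sg _ x0 dmin H]) (use common in blast)+
    qed
    then obtain l where "l \<in> set ls" "\<bar>l\<bar> < s" by blast
    then have ex': "\<exists>l\<in>set ls. \<not> l \<ge> s \<and> \<not> -l \<ge> s"
      by (intro bexI[of _ l]) (auto simp: abs_less_iff)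
    have "\<not> ls ! k1 \<ge> s \<and> \<not> -(ls ! k2) \<ge> s"
      unfolding k1_def k2_def
      by (rule median_bound[OF ls(1) n ls(2) symm, of "\<lambda>x. x \<ge> s"]) (use sp ex' in auto)
    then show ?thesis unfolding HL using k12 by auto
  qed
  show ?thesis using part1 part2 unfolding s_def by blast
qed

end
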